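(* Let $G_m$ be a totally ascending braid Gauss diagram with $r$ circles. Then $r=m+w(G_m)$.
   Context: Braid Gauss diagrams. $B_m$ is the Artin braid group with generators $\sigma_1,\dots,\sigma_{m-1}$. For a word $\beta$ in $\sigma_i^{\pm1}$, the closed braid diagram $D$ of $\beta$ is obtained by joining the top and bottom endpoints of the $m$ strands by $m$ parallel closing strands; it represents an oriented link. The Gauss diagram $G$ of $D$ has one oriented circle parametrizing each component of $D$, and for each crossing an arrow joining its two preimages, pointing from the overpassing preimage to the underpassing one, carrying the sign (local writhe) of the crossing. An arc of $G$ is a connected component of the complement in the circles of all arrow endpoints. The braid Gauss diagram $G_m$ is $G$ together with labels $a_1,\dots,a_m$, where $a_i$ is the arc of $G$ containing the preimage of the $i$-th closing strand. The writhe $w(G_m)$ is the sum of the signs of all arrows. Totally ascending. Let $G_m$ have $r$ circles. For each circle $C$ let $\mu(C)$ be the smallest index $i$ such that the arc $a_i$ lies on $C$. Order the circles so that $\mu(C_1)<\mu(C_2)<\dots<\mu(C_r)$ (so $\mu(C_1)=1$); $C_i$ is the $i$-th circle. $G_m$ is totally ascending if for every pair $1\le i\le j\le r$: walking once around $C_i$ in its orientation, starting from the arc $a_{\mu(C_i)}$, every arrow connecting $C_i$ and $C_j$ (for $i=j$: every arrow with both endpoints on $C_i$) is met first at its head. *)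

theory Defs
  imports Main
begin

text \<open>
A braid word in B_m is a list of letters (i, e): (i, True) is sigma_i and
(i, False) is sigma_i^{-1}, with 1 <= i < m.  Strand positions are 1..m,
numbered left to right.  Letter number k (0-based in the list) is the k-th
crossing from the bottom; the braid strands are oriented upwards (bottom to
top) and the closing strands run from top position j back down to bottom
position j.  Under the standard convention, sigma_i is a positive crossing,
in which the strand entering it from the bottom-left position i passes over
the strand entering from position i+1; sigma_i^{-1} is the negative crossing
with the opposite over/under information.

A preimage of crossing k on the Gauss circles is encoded as (k, True)
(the strand entering crossing k from the left, i.e. from position i) or
(k, False) (the strand entering from position i+1).
\<close>

type_synonym letter = "nat \<times> bool"

definition valid_braid :: "nat \<Rightarrow> letter list \<Rightarrow> bool" where
  "valid_braid m w \<longleftrightarrow> 1 \<le> m \<and> (\<forall>(i,e)\<in>set w. 1 \<le> i \<and> i < m)"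

definition step :: "letter \<Rightarrow> nat \<Rightarrow> nat" where
  "step l p = (if p = fst l then fst l + 1 else if p = fst l + 1 then fst l else p)"

text \<open>Top position reached by the strand starting at bottom position p.\<close>
definition braid_perm :: "letter list \<Rightarrow> nat \<Rightarrow> nat" where
  "braid_perm w p = fold step w p"

text \<open>Crossing preimages met (in order) by the strand going up from bottom
position p; the first argument is the remaining word, k the index of its
first letter.\<close>
fun events_from :: "letter list \<Rightarrow> nat \<Rightarrow> nat \<Rightarrow> (nat \<times> bool) list" where
  "events_from [] k p = []"
| "events_from (l # ls) k p =
     (if p = fst l then [(k, True)] else if p = fst l + 1 then [(k, False)] else [])
     @ events_from ls (Suc k) (step l p)"

text \<open>The head (underpass preimage) of the arrow of crossing k:
for sigma_i the left strand is over, so the head is the right preimage.\<close>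
definition head_side :: "letter list \<Rightarrow> nat \<Rightarrow> bool" where
  "head_side w k = (\<not> snd (w ! k))"

definition arrow_sign :: "letter list \<Rightarrow> nat \<Rightarrow> int" where
  "arrow_sign w k = (if snd (w ! k) then 1 else -1)"

definition writhe :: "letter list \<Rightarrow> int" where
  "writhe w = (\<Sum>k<length w. arrow_sign w k)"

text \<open>The circle containing the label a_j, represented by the set of
labels (closing strands) lying on it.\<close>
definition circle_of :: "letter list \<Rightarrow> nat \<Rightarrow> nat set" where
  "circle_of w j = {(braid_perm w ^^ t) j | t. True}"

definition circles :: "nat \<Rightarrow> letter list \<Rightarrow> nat set set" where
  "circles m w = circle_of w ` {1..m}"

definition num_circles :: "nat \<Rightarrow> letter list \<Rightarrow> nat" where
  "num_circles m w = card (circles m w)"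

definition mu :: "letter list \<Rightarrow> nat \<Rightarrow> nat" where
  "mu w j = Min (circle_of w j)"

definition circle_reps :: "nat \<Rightarrow> letter list \<Rightarrow> nat set" where
  "circle_reps m w = {j \<in> {1..m}. mu w j = j}"

definition period :: "letter list \<Rightarrow> nat \<Rightarrow> nat" where
  "period w j = (LEAST t. 0 < t \<and> (braid_perm w ^^ t) j = j)"

text \<open>Arrow endpoints met when walking once around the circle through a_j,
starting from the arc a_j.\<close>
definition circle_walk :: "letter list \<Rightarrow> nat \<Rightarrow> (nat \<times> bool) list" where
  "circle_walk w j =
     concat (map (\<lambda>t. events_from w 0 ((braid_perm w ^^ t) j)) [0..<period w j])"

text \<open>Totally ascending: for circles C_i, C_j with mu(C_i) <= mu(C_j) (i.e. i <= j),
walking around C_i from a_{mu(C_i)}, every arrow with one endpoint on C_i and the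
other on C_j is met first at its head.\<close>
definition totally_ascending :: "nat \<Rightarrow> letter list \<Rightarrow> bool" where
  "totally_ascending m w \<longleftrightarrow>
     (\<forall>a\<in>circle_reps m w. \<forall>b\<in>circle_reps m w. a \<le> b \<longrightarrow>
       (\<forall>idx < length (circle_walk w a).
          let (k, s) = circle_walk w a ! idx in
          ((k, \<not> s) \<in> set (circle_walk w b) \<and>
           (\<forall>idx' < idx. fst (circle_walk w a ! idx') \<noteq> k))
          \<longrightarrow> s = head_side w k))"

end

theory Submission
  imports Defs
begin

lemma step_step[simp]: "step l (step l p) = p"
  by (auto simp: step_def)

lemma step_inj: "inj (step l)"
  by (metis injI step_step)

definition pos :: "letter list \<Rightarrow> nat \<Rightarrow> nat \<Rightarrow> nat" where
  "pos w j p = fold step (take j w) p"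

lemma fold_step_rev[simp]: "fold step (rev xs) (fold step xs p) = p"
  by (induction xs arbitrary: p) auto

lemma fold_step_rev'[simp]: "fold step xs (fold step (rev xs) p) = p"
  using fold_step_rev[of "rev xs"] by simp

lemma fold_step_inj: "inj (fold step xs)"
  by (metis injI fold_step_rev)

lemma pos_0[simp]: "pos w 0 p = p" by (simp add: pos_def)
lemma pos_len: "pos w (length w) p = braid_perm w p" by (simp add: pos_def braid_perm_def)
lemma pos_Suc: "k < length w \<Longrightarrow> pos w (Suc k) p = step (w!k) (pos w k p)"
  by (simp add: pos_def take_Suc_conv_app_nth)

lemma pos_inj: "pos w k p = pos w k q \<Longrightarrow> p = q"
  unfolding pos_def using fold_step_inj by (metis injD)

lemma step_in: "valid_braid m w \<Longrightarrow> l \<in> set w \<Longrightarrow> p \<in> {1..m} \<Longrightarrow> step l p \<in> {1..m}"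
  by (auto simp: valid_braid_def step_def)

lemma fold_in: "valid_braid m w \<Longrightarrow> set xs \<subseteq> set w \<Longrightarrow> p \<in> {1..m} \<Longrightarrow> fold step xs p \<in> {1..m}"
proof (induction xs arbitrary: p)
  case (Cons a xs)
  then show ?case using step_in[of m w a p] by simp
qed simp

lemma pos_in: "valid_braid m w \<Longrightarrow> p \<in> {1..m} \<Longrightarrow> pos w k p \<in> {1..m}"
  unfolding pos_def by (rule fold_in) (auto dest: in_set_takeD)

lemma pos_surj: "valid_braid m w \<Longrightarrow> x \<in> {1..m} \<Longrightarrow> \<exists>p\<in>{1..m}. pos w k p = x"
  apply (rule bexI[of _ "fold step (rev (take k w)) x"])
   apply (simp add: pos_def)
  by (rule fold_in) (auto dest: in_set_takeD)

lemma perm_in: "valid_braid m w \<Longrightarrow> p \<in> {1..m} \<Longrightarrow> braid_perm w p \<in> {1..m}"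
  using pos_in[of m w p "length w"] by (simp add: pos_len)

lemma perm_inj: "inj (braid_perm w)"
  unfolding braid_perm_def by (rule fold_step_inj)

lemma perm_surj: "valid_braid m w \<Longrightarrow> x \<in> {1..m} \<Longrightarrow> \<exists>p\<in>{1..m}. braid_perm w p = x"
  using pos_surj[of m w x "length w"] by (simp add: pos_len)

lemma events_gen: "(k,s) \<in> set (events_from ls k0 p) \<longleftrightarrow>
   k0 \<le> k \<and> k < k0 + length ls \<and>
   fold step (take (k-k0) ls) p = (if s then fst (ls!(k-k0)) else fst (ls!(k-k0)) + 1)"
proof (induction ls arbitrary: k0 p)
  case Nil then show ?case by simp
next
  case (Cons l ls)
  show ?case
  proof (cases "k = k0")
    case True
    then show ?thesis using Cons[of "Suc k0" "step l p"] by auto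
  next
    case False
    show ?thesis
    proof (cases "k0 \<le> k")
      case True
      with False obtain j where j: "k - k0 = Suc j" "k - Suc k0 = j"
        by (metis Suc_diff_Suc le_neq_implies_less)
      show ?thesis using Cons[of "Suc k0" "step l p"] False True j by auto
    next
      case f2: False
      then show ?thesis using Cons[of "Suc k0" "step l p"] False by auto
    qed
  qed
qed

lemma events_iff: "(k,s) \<in> set (events_from w 0 p) \<longleftrightarrow>
   k < length w \<and> pos w k p = (if s then fst (w!k) else fst (w!k) + 1)"
  using events_gen[of k s w 0 p] by (simp add: pos_def)


lemma funpow_in: "valid_braid m w \<Longrightarrow> p \<in> {1..m} \<Longrightarrow> (braid_perm w ^^ t) p \<in> {1..m}"
proof (induction t)
  case (Suc t)
  then show ?case using perm_in[of m w "(braid_perm w ^^ t) p"] by simp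
qed simp

lemma funpow_inj: "inj (braid_perm w ^^ t)"
  using perm_inj by (rule inj_fn)

lemma exists_period:
  assumes v: "valid_braid m w" and p: "p \<in> {1..m}"
  shows "\<exists>n>0. (braid_perm w ^^ n) p = p"
proof -
  let ?f = "\<lambda>t. (braid_perm w ^^ t) p"
  have "?f ` {0..m} \<subseteq> {1..m}" using funpow_in[OF v p] by auto
  hence "card (?f ` {0..m}) \<le> card {1..m::nat}" by (intro card_mono) auto
  hence "\<not> inj_on ?f {0..m}" using card_image[of ?f "{0..m}"] by auto
  then obtain i j where ij: "i \<le> m" "j \<le> m" "i \<noteq> j" "?f i = ?f j"
    unfolding inj_on_def by auto
  { fix i j assume "i < j" "?f i = ?f j"
    then have "(braid_perm w ^^ i) ((braid_perm w ^^ (j - i)) p) = (braid_perm w ^^ i) p"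
      by (metis funpow_add le_add_diff_inverse less_imp_le_nat o_apply)
    hence "(braid_perm w ^^ (j - i)) p = p" using funpow_inj by (metis injD)
    hence "\<exists>n>0. (braid_perm w ^^ n) p = p" using \<open>i<j\<close> by (intro exI[of _ "j-i"]) auto }
  with ij show ?thesis by (metis linorder_neqE_nat)
qed

lemma period_props:
  assumes v: "valid_braid m w" and p: "p \<in> {1..m}"
  shows "0 < period w p" "(braid_perm w ^^ period w p) p = p"
    "\<And>t. 0 < t \<Longrightarrow> t < period w p \<Longrightarrow> (braid_perm w ^^ t) p \<noteq> p"
proof -
  obtain n where n: "0 < n \<and> (braid_perm w ^^ n) p = p" using exists_period[OF v p] by auto
  show "0 < period w p" "(braid_perm w ^^ period w p) p = p"
    unfolding period_def using LeastI[of "\<lambda>t. 0 < t \<and> (braid_perm w ^^ t) p = p", OF n] by auto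
  fix t assume "0 < t" "t < period w p"
  then show "(braid_perm w ^^ t) p \<noteq> p" unfolding period_def using not_less_Least by blast
qed

lemma funpow_mult_period:
  assumes v: "valid_braid m w" and p: "p \<in> {1..m}"
  shows "(braid_perm w ^^ (q * period w p)) p = p"
proof (induction q)
  case (Suc q)
  have "(braid_perm w ^^ (Suc q * period w p)) p
      = (braid_perm w ^^ (q * period w p)) ((braid_perm w ^^ period w p) p)"
  proof -
    have "Suc q * period w p = q * period w p + period w p" by simp
    then show ?thesis by (simp only: funpow_add o_apply)
  qed
  then show ?case using Suc period_props(2)[OF v p] by simp
qed simp

lemma funpow_mod:
  assumes v: "valid_braid m w" and p: "p \<in> {1..m}"
  shows "(braid_perm w ^^ t) p = (braid_perm w ^^ (t mod period w p)) p"
proof -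
  have "t = t mod period w p + (t div period w p) * period w p" by (metis mod_div_mult_eq)
  hence "(braid_perm w ^^ t) p = (braid_perm w ^^ (t mod period w p)) ((braid_perm w ^^ ((t div period w p) * period w p)) p)"
    by (metis funpow_add o_apply)
  then show ?thesis using funpow_mult_period[OF v p] by simp
qed

lemma funpow_distinct:
  assumes v: "valid_braid m w" and p: "p \<in> {1..m}"
    and "i < period w p" "j < period w p" "(braid_perm w ^^ i) p = (braid_perm w ^^ j) p"
  shows "i = j"
proof (rule ccontr)
  assume "i \<noteq> j"
  { fix i j assume ij: "i < j" "j < period w p" "(braid_perm w ^^ i) p = (braid_perm w ^^ j) p"
    then have "(braid_perm w ^^ i) ((braid_perm w ^^ (j - i)) p) = (braid_perm w ^^ i) p"
      by (metis funpow_add le_add_diff_inverse less_imp_le_nat o_apply)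
    hence "(braid_perm w ^^ (j - i)) p = p" using funpow_inj by (metis injD)
    moreover have "0 < j - i" "j - i < period w p" using ij by auto
    ultimately have False using period_props(3)[OF v p] by blast }
  then show False using assms \<open>i \<noteq> j\<close> by (metis linorder_neqE_nat)
qed

lemma circle_of_alt:
  assumes v: "valid_braid m w" and p: "p \<in> {1..m}"
  shows "circle_of w p = {(braid_perm w ^^ t) p | t. t < period w p}"
proof
  show "circle_of w p \<subseteq> {(braid_perm w ^^ t) p | t. t < period w p}"
  proof
    fix x assume "x \<in> circle_of w p"
    then obtain t where "x = (braid_perm w ^^ t) p" unfolding circle_of_def by auto
    hence "x = (braid_perm w ^^ (t mod period w p)) p" using funpow_mod[OF v p, of t] by (rule trans)
    moreover have "t mod period w p < period w p" using period_props(1)[OF v p] by simp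
    ultimately show "x \<in> {(braid_perm w ^^ t) p | t. t < period w p}" by blast
  qed
next
  show "{(braid_perm w ^^ t) p | t. t < period w p} \<subseteq> circle_of w p"
    unfolding circle_of_def by blast
qed

lemma circle_sub: "valid_braid m w \<Longrightarrow> p \<in> {1..m} \<Longrightarrow> circle_of w p \<subseteq> {1..m}"
  unfolding circle_of_def using funpow_in[of m w p] by auto

lemma circle_finite: "valid_braid m w \<Longrightarrow> p \<in> {1..m} \<Longrightarrow> finite (circle_of w p)"
  using circle_sub[of m w p] by (meson finite_atLeastAtMost finite_subset)

lemma circle_self: "p \<in> circle_of w p"
proof -
  have "p = (braid_perm w ^^ 0) p" by simp
  then show ?thesis unfolding circle_of_def by blast
qed

lemma circle_trans:
  assumes v: "valid_braid m w" and p: "p \<in> {1..m}" and q: "q \<in> circle_of w p"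
  shows "circle_of w q = circle_of w p"
proof -
  obtain t where t: "t < period w p" "q = (braid_perm w ^^ t) p"
    using q circle_of_alt[OF v p] by auto
  show ?thesis
  proof
    show "circle_of w q \<subseteq> circle_of w p"
    proof
      fix x assume "x \<in> circle_of w q"
      then obtain s where "x = (braid_perm w ^^ s) q" unfolding circle_of_def by auto
      hence "x = (braid_perm w ^^ (s + t)) p" using t(2) by (simp only: funpow_add o_apply)
      then show "x \<in> circle_of w p" unfolding circle_of_def by blast
    qed
  next
    have "(braid_perm w ^^ (period w p - t)) q = (braid_perm w ^^ (period w p - t + t)) p"
      unfolding t(2) by (simp add: funpow_add)
    also have "\<dots> = p" using t(1) period_props(2)[OF v p] by simp
    finally have eq: "(braid_perm w ^^ (period w p - t)) q = p" .
    obtain u where u: "p = (braid_perm w ^^ u) q" using eq[symmetric] by blast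
    show "circle_of w p \<subseteq> circle_of w q"
    proof
      fix x assume "x \<in> circle_of w p"
      then obtain s where "x = (braid_perm w ^^ s) p" unfolding circle_of_def by auto
      hence "x = (braid_perm w ^^ (s + u)) q" using u by (simp only: funpow_add o_apply)
      then show "x \<in> circle_of w q" unfolding circle_of_def by blast
    qed
  qed
qed

lemma circle_perm: "braid_perm w p \<in> circle_of w p"
  unfolding circle_of_def by (rule CollectI, rule exI[of _ 1]) simp


lemma concat_order:
  assumes tu: "t < u" "u < n" and y: "y \<in> set (f t)"
    and only: "\<And>t'. t' < n \<Longrightarrow> x \<in> set (f t') \<Longrightarrow> t' = u"
    and j: "j < length (concat (map f [0..<n]))" "concat (map f [0..<n]) ! j = x"
  shows "\<exists>i<j. concat (map f [0..<n]) ! i = y"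
proof -
  let ?pre = "concat (map f [0..<u])" and ?post = "concat (map f [u..<n])"
  have split: "concat (map f [0..<n]) = ?pre @ ?post"
    using tu by (metis concat_append map_append less_imp_le_nat upt_add_eq_append zero_le le_add_diff_inverse)
  have "y \<in> set ?pre" using tu y by auto
  then obtain i where i: "i < length ?pre" "?pre ! i = y" by (metis in_set_conv_nth)
  have "\<not> j < length ?pre"
  proof
    assume "j < length ?pre"
    hence "?pre ! j = x" using j(2) split by (simp add: nth_append)
    hence "x \<in> set ?pre" using \<open>j < length ?pre\<close> by (metis nth_mem)
    then obtain t' where "t' < u" "x \<in> set (f t')" by auto
    with only[of t'] tu show False by simp
  qed
  with i split show ?thesis by (intro exI[of _ i]) (auto simp: nth_append)
qed


context
  fixes m :: nat and w :: "letter list"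
  assumes v: "valid_braid m w"
begin

lemma circle_eq_min: "p \<in> {1..m} \<Longrightarrow> mu w p \<in> circle_of w p"
  unfolding mu_def using circle_finite[OF v] circle_self by (metis Min_in empty_iff)

lemma mu_le: "p \<in> {1..m} \<Longrightarrow> q \<in> circle_of w p \<Longrightarrow> mu w p \<le> q"
  unfolding mu_def using circle_finite[OF v] by (metis Min_le)

lemma mu_le_self: "p \<in> {1..m} \<Longrightarrow> mu w p \<le> p"
  using mu_le circle_self by metis

lemma mu_S: "p \<in> {1..m} \<Longrightarrow> mu w p \<in> {1..m}"
  using circle_eq_min circle_sub[OF v] by blast

lemma circle_mu: "p \<in> {1..m} \<Longrightarrow> circle_of w (mu w p) = circle_of w p"
  using circle_trans[OF v] circle_eq_min by blast

lemma mu_mu: "p \<in> {1..m} \<Longrightarrow> mu w (mu w p) = mu w p"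
  using circle_mu unfolding mu_def by metis

lemma mu_circle_eq: "p \<in> {1..m} \<Longrightarrow> q \<in> circle_of w p \<Longrightarrow> mu w q = mu w p"
  using circle_trans[OF v] unfolding mu_def by metis

lemma mu_perm: "p \<in> {1..m} \<Longrightarrow> mu w (braid_perm w p) = mu w p"
  using mu_circle_eq circle_perm by metis

definition idx :: "nat \<Rightarrow> nat" where
  "idx q = (LEAST t. (braid_perm w ^^ t) (mu w q) = q)"

lemma idx_props:
  assumes q: "q \<in> {1..m}"
  shows "idx q < period w (mu w q)" "(braid_perm w ^^ idx q) (mu w q) = q"
proof -
  have a: "mu w q \<in> {1..m}" using mu_S q .
  have "q \<in> circle_of w (mu w q)" using circle_mu[OF q] circle_self by simp
  then obtain t where t: "t < period w (mu w q)" "(braid_perm w ^^ t) (mu w q) = q"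
    using circle_of_alt[OF v a] by auto
  show "(braid_perm w ^^ idx q) (mu w q) = q"
    unfolding idx_def using t(2) by (rule LeastI)
  have "idx q \<le> t" unfolding idx_def using t(2) by (rule Least_le)
  then show "idx q < period w (mu w q)" using t(1) by simp
qed

lemma idx_unique:
  assumes q: "q \<in> {1..m}" and t: "t < period w (mu w q)" "(braid_perm w ^^ t) (mu w q) = q"
  shows "idx q = t"
  using funpow_distinct[OF v mu_S[OF q] idx_props(1)[OF q] t(1)] idx_props(2)[OF q] t(2) by simp

lemma idx_zero: "q \<in> {1..m} \<Longrightarrow> idx q = 0 \<longleftrightarrow> mu w q = q"
proof
  assume q: "q \<in> {1..m}" and "idx q = 0"
  then show "mu w q = q" using idx_props(2)[OF q] by simp
next
  assume q: "q \<in> {1..m}" and "mu w q = q"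
  then show "idx q = 0" using idx_unique[OF q, of 0] period_props(1)[OF v mu_S[OF q]] by simp
qed

lemma idx_perm:
  assumes q: "q \<in> {1..m}"
  shows "idx (braid_perm w q) = Suc (idx q) mod period w (mu w q)"
proof -
  let ?f = "braid_perm w" and ?a = "mu w q" and ?L = "period w (mu w q)"
  have q': "?f q \<in> {1..m}" using perm_in[OF v q] .
  have ma: "mu w (?f q) = ?a" using mu_perm[OF q] .
  have "(?f ^^ (Suc (idx q) mod ?L)) ?a = (?f ^^ Suc (idx q)) ?a"
    using funpow_mod[OF v mu_S[OF q], of "Suc (idx q)"] by (rule sym)
  also have "\<dots> = ?f q" using idx_props(2)[OF q] by simp
  finally have e: "(?f ^^ (Suc (idx q) mod ?L)) ?a = ?f q" .
  have "Suc (idx q) mod ?L < ?L" using period_props(1)[OF v mu_S[OF q]] by simp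
  then show ?thesis using idx_unique[OF q'] e unfolding ma by simp
qed

definition before :: "nat \<Rightarrow> nat \<Rightarrow> bool" where
  "before p q \<longleftrightarrow> mu w p < mu w q \<or> (mu w p = mu w q \<and> idx p < idx q)"

lemma before_total:
  assumes p: "p \<in> {1..m}" and q: "q \<in> {1..m}" and "p \<noteq> q"
  shows "before p q \<or> before q p"
proof (rule ccontr)
  assume "\<not> (before p q \<or> before q p)"
  hence "mu w p = mu w q" "idx p = idx q" unfolding before_def by auto
  then show False using idx_props(2)[OF p] idx_props(2)[OF q] \<open>p \<noteq> q\<close> by metis
qed

lemma before_asym: "before p q \<Longrightarrow> \<not> before q p"
  unfolding before_def by auto


lemma walk_mem:
  assumes a: "a \<in> {1..m}"
  shows "x \<in> set (circle_walk w a) \<longleftrightarrow> (\<exists>z\<in>circle_of w a. x \<in> set (events_from w 0 z))"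
  unfolding circle_walk_def circle_of_alt[OF v a] by fastforce

lemma reps_mem: "p \<in> {1..m} \<Longrightarrow> mu w p \<in> circle_reps m w"
  unfolding circle_reps_def using mu_S mu_mu by simp


lemma cross_head:
  assumes k: "k < length w" and X: "X \<in> {1..m}" and Y: "Y \<in> {1..m}"
    and pX: "pos w k X = (if sx then fst (w!k) else fst (w!k) + 1)"
    and pY: "pos w k Y = (if \<not> sx then fst (w!k) else fst (w!k) + 1)"
    and bXY: "before X Y" and ta: "totally_ascending m w"
  shows "sx = head_side w k"
proof -
  define a where "a = mu w X"
  define b where "b = mu w Y"
  define W where "W = circle_walk w a"
  have aS: "a \<in> {1..m}" unfolding a_def using mu_S[OF X] .
  have bS: "b \<in> {1..m}" unfolding b_def using mu_S[OF Y] .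
  have ab: "a \<le> b" using bXY unfolding before_def a_def b_def by auto
  have ra: "a \<in> circle_reps m w" unfolding a_def using reps_mem[OF X] .
  have rb: "b \<in> circle_reps m w" unfolding b_def using reps_mem[OF Y] .
  have evX: "(k,sx) \<in> set (events_from w 0 X)" using events_iff k pX by simp
  have evY: "(k,\<not>sx) \<in> set (events_from w 0 Y)" using events_iff k pY by simp
  have Xa: "X \<in> circle_of w a" unfolding a_def using circle_mu[OF X] circle_self by simp
  have Yb: "Y \<in> circle_of w b" unfolding b_def using circle_mu[OF Y] circle_self by simp
  have inW: "(k,sx) \<in> set W" unfolding W_def using walk_mem[OF aS] Xa evX by blast
  then obtain j0 where j0: "j0 < length W" "W ! j0 = (k,sx)" by (metis in_set_conv_nth)
  define idx0 where "idx0 = (LEAST j. j < length W \<and> fst (W!j) = k)"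
  have I: "idx0 < length W \<and> fst (W!idx0) = k"
    unfolding idx0_def by (rule LeastI[of _ j0]) (simp add: j0)
  have bef: "\<forall>j<idx0. fst (W!j) \<noteq> k"
  proof (intro allI impI)
    fix j assume "j < idx0"
    hence "\<not> (j < length W \<and> fst (W!j) = k)" unfolding idx0_def by (rule not_less_Least)
    then show "fst (W!j) \<noteq> k" using \<open>j < idx0\<close> I by simp
  qed
  obtain s where Ws: "W ! idx0 = (k,s)" using I by (metis prod.collapse)
  have s_eq: "s = sx"
  proof (rule ccontr)
    assume "s \<noteq> sx"
    hence sn: "s = (\<not> sx)" by auto
    have "(k,s) \<in> set W" using Ws I by (metis nth_mem)
    then obtain z where z: "z \<in> circle_of w a" "(k,s) \<in> set (events_from w 0 z)"
      unfolding W_def using walk_mem[OF aS] by blast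
    have "pos w k z = pos w k Y" using z(2) events_iff pY sn by auto
    hence zY: "z = Y" by (rule pos_inj)
    have muY: "mu w Y = a" using mu_circle_eq[OF aS] z(1) zY mu_mu[OF X] unfolding a_def by simp
    hence ixy: "idx X < idx Y" using bXY unfolding before_def a_def by simp
    let ?f = "\<lambda>t. events_from w 0 ((braid_perm w ^^ t) a)"
    have Wc: "W = concat (map ?f [0..<period w a])" unfolding W_def circle_walk_def ..
    have u: "idx Y < period w a" using idx_props(1)[OF Y] muY by simp
    have yin: "(k,sx) \<in> set (?f (idx X))" using idx_props(2)[OF X] evX unfolding a_def by simp
    have only: "t' = idx Y" if "t' < period w a" "(k,\<not>sx) \<in> set (?f t')" for t'
    proof -
      have "pos w k ((braid_perm w ^^ t') a) = pos w k Y" using that(2) events_iff pY by auto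
      hence "(braid_perm w ^^ t') a = Y" by (rule pos_inj)
      then show ?thesis using idx_unique[OF Y, of t'] that(1) muY by simp
    qed
    obtain i where "i < idx0" "W ! i = (k,sx)"
      using concat_order[of "idx X" "idx Y" "period w a" "(k,sx)" ?f "(k,\<not>sx)" idx0,
          OF ixy u yin only] I Ws sn Wc by auto
    then show False using bef by auto
  qed
  have inWb: "(k, \<not> s) \<in> set (circle_walk w b)" using walk_mem[OF bS] Yb evY s_eq by blast
  have "let (k', s') = circle_walk w a ! idx0 in
        ((k', \<not> s') \<in> set (circle_walk w b) \<and> (\<forall>idx'<idx0. fst (circle_walk w a ! idx') \<noteq> k'))
        \<longrightarrow> s' = head_side w k'"
    using ta ra rb ab I unfolding totally_ascending_def W_def by blast
  then have "((k, \<not> s) \<in> set (circle_walk w b) \<and> (\<forall>idx'<idx0. fst (W ! idx') \<noteq> k))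
        \<longrightarrow> s = head_side w k" using Ws unfolding W_def by simp
  then show ?thesis using inWb bef s_eq by simp
qed


definition As :: "nat \<Rightarrow> (nat \<times> nat) set" where
  "As j = {z \<in> {1..m} \<times> {1..m}. before (fst z) (snd z) \<and> pos w j (fst z) < pos w j (snd z)}"

lemma As_mem: "(x,y) \<in> As j \<longleftrightarrow> x \<in> {1..m} \<and> y \<in> {1..m} \<and> before x y \<and> pos w j x < pos w j y"
  unfolding As_def by auto

lemma As_finite: "finite (As j)"
  unfolding As_def by (rule finite_subset[of _ "{1..m} \<times> {1..m}"]) auto

lemma step_order:
  assumes "a \<noteq> b" "\<not> (a = fst l \<and> b = fst l + 1)" "\<not> (a = fst l + 1 \<and> b = fst l)"
  shows "step l a < step l b \<longleftrightarrow> a < b"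
  using assms unfolding step_def by auto

lemma As_step:
  assumes k: "k < length w" and ta: "totally_ascending m w"
  shows "int (card (As (Suc k))) = int (card (As k)) + arrow_sign w k"
proof -
  define i where "i = fst (w!k)"
  have "w!k \<in> set w" using k by simp
  hence iS: "i \<in> {1..m}" "i + 1 \<in> {1..m}" using v unfolding valid_braid_def i_def by auto
  obtain P where P: "P \<in> {1..m}" "pos w k P = i" using pos_surj[OF v iS(1)] by blast
  obtain Q where Q: "Q \<in> {1..m}" "pos w k Q = i + 1" using pos_surj[OF v iS(2)] by blast
  have PQ: "P \<noteq> Q" using P Q by auto
  have PS: "pos w (Suc k) P = i + 1" using pos_Suc[OF k] P unfolding step_def i_def by simp
  have QS: "pos w (Suc k) Q = i" using pos_Suc[OF k] Q unfolding step_def i_def by simp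
  have key: "pos w (Suc k) x < pos w (Suc k) y \<longleftrightarrow> pos w k x < pos w k y"
    if "(x,y) \<noteq> (P,Q)" "(x,y) \<noteq> (Q,P)" for x y
  proof (cases "x = y")
    case False
    hence "pos w k x \<noteq> pos w k y" using pos_inj by metis
    moreover have "\<not> (pos w k x = fst (w!k) \<and> pos w k y = fst (w!k) + 1)"
      using that P Q pos_inj unfolding i_def by metis
    moreover have "\<not> (pos w k x = fst (w!k) + 1 \<and> pos w k y = fst (w!k))"
      using that P Q pos_inj unfolding i_def by metis
    ultimately show ?thesis using step_order pos_Suc[OF k] by simp
  qed simp
  have fin: "finite (As j)" for j using As_finite .
  show ?thesis
  proof (cases "before P Q")
    case True
    have "True = head_side w k"
      using cross_head[OF k P(1) Q(1), of True] P Q True ta unfolding i_def by simp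
    hence sg: "arrow_sign w k = -1" unfolding head_side_def arrow_sign_def by simp
    have eq: "As k = insert (P,Q) (As (Suc k))"
    proof (intro set_eqI)
      fix z :: "nat \<times> nat"
      obtain x y where z: "z = (x,y)" by fastforce
      show "z \<in> As k \<longleftrightarrow> z \<in> insert (P,Q) (As (Suc k))"
      proof (cases "(x,y) = (P,Q)")
        case True
        then show ?thesis using z P Q PS QS \<open>before P Q\<close> As_mem by auto
      next
        case f1: False
        show ?thesis
        proof (cases "(x,y) = (Q,P)")
          case True
          then show ?thesis using z \<open>before P Q\<close> before_asym As_mem PQ by auto
        next
          case False
          then show ?thesis using z f1 key[OF f1 False] As_mem by auto
        qed
      qed
    qed
    have "(P,Q) \<notin> As (Suc k)" using PS QS As_mem by simp
    hence "card (As k) = Suc (card (As (Suc k)))" using eq fin by simp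
    then show ?thesis using sg by simp
  next
    case False
    hence bQP: "before Q P" using before_total[OF P(1) Q(1) PQ] by simp
    have "False = head_side w k"
      using cross_head[OF k Q(1) P(1), of False] P Q bQP ta unfolding i_def by simp
    hence sg: "arrow_sign w k = 1" unfolding head_side_def arrow_sign_def by simp
    have eq: "As (Suc k) = insert (Q,P) (As k)"
    proof (intro set_eqI)
      fix z :: "nat \<times> nat"
      obtain x y where z: "z = (x,y)" by fastforce
      show "z \<in> As (Suc k) \<longleftrightarrow> z \<in> insert (Q,P) (As k)"
      proof (cases "(x,y) = (Q,P)")
        case True
        then show ?thesis using z P Q PS QS bQP As_mem by auto
      next
        case f1: False
        show ?thesis
        proof (cases "(x,y) = (P,Q)")
          case True
          then show ?thesis using z bQP before_asym As_mem PQ by auto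
        next
          case f2: False
          then show ?thesis using z f1 key[OF f2 f1] As_mem by auto
        qed
      qed
    qed
    have "(Q,P) \<notin> As k" using P Q As_mem by simp
    hence "card (As (Suc k)) = Suc (card (As k))" using eq fin by simp
    then show ?thesis using sg by simp
  qed
qed

lemma As_sum:
  assumes ta: "totally_ascending m w"
  shows "j \<le> length w \<Longrightarrow> int (card (As j)) = int (card (As 0)) + (\<Sum>k<j. arrow_sign w k)"
proof (induction j)
  case (Suc j)
  then show ?case using As_step[of j, OF _ ta] by simp
qed simp

lemma writhe_As:
  assumes ta: "totally_ascending m w"
  shows "writhe w = int (card (As (length w))) - int (card (As 0))"
  using As_sum[OF ta, of "length w"] unfolding writhe_def by simp


definition NB :: "nat set" where "NB = {q \<in> {1..m}. mu w q \<noteq> q}"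
definition BB :: "(nat \<times> nat) set" where "BB = (\<lambda>q. (mu w q, q)) ` NB"

lemma idx_succ:
  assumes p: "p \<in> {1..m}" and nz: "idx (braid_perm w p) \<noteq> 0"
  shows "idx (braid_perm w p) = Suc (idx p)" "Suc (idx p) < period w (mu w p)"
proof -
  have l: "idx p < period w (mu w p)" using idx_props(1)[OF p] .
  have e: "idx (braid_perm w p) = Suc (idx p) mod period w (mu w p)" using idx_perm[OF p] .
  show lt: "Suc (idx p) < period w (mu w p)"
  proof (rule ccontr)
    assume "\<not> ?thesis"
    hence "Suc (idx p) = period w (mu w p)" using l by simp
    thus False using e nz by simp
  qed
  show "idx (braid_perm w p) = Suc (idx p)" using e lt by simp
qed

lemma img_sub: "map_prod (braid_perm w) (braid_perm w) ` As (length w) \<subseteq> As 0 - BB"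
proof
  fix z assume "z \<in> map_prod (braid_perm w) (braid_perm w) ` As (length w)"
  then obtain p q where z: "z = (braid_perm w p, braid_perm w q)" and pq: "(p,q) \<in> As (length w)"
    by auto
  let ?f = "braid_perm w"
  have p: "p \<in> {1..m}" and q: "q \<in> {1..m}" and b: "before p q" and lt: "?f p < ?f q"
    using pq As_mem pos_len by auto
  have fp: "?f p \<in> {1..m}" and fq: "?f q \<in> {1..m}" using perm_in[OF v] p q by auto
  have mp: "mu w (?f p) = mu w p" and mq: "mu w (?f q) = mu w q" using mu_perm p q by auto
  show "z \<in> As 0 - BB"
  proof (cases "mu w p < mu w q")
    case True
    have "before (?f p) (?f q)" unfolding before_def using mp mq True by simp
    moreover have "(?f p, ?f q) \<notin> BB"
    proof
      assume "(?f p, ?f q) \<in> BB"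
      hence "?f p = mu w (?f q)" unfolding BB_def by auto
      hence "mu w (?f p) = mu w q" using mq mu_mu[OF q] by simp
      thus False using mp True by simp
    qed
    ultimately show ?thesis using z fp fq lt As_mem by simp
  next
    case False
    hence same: "mu w p = mu w q" and ipq: "idx p < idx q" using b unfolding before_def by auto
    have nzq: "idx (?f q) \<noteq> 0"
    proof
      assume "idx (?f q) = 0"
      hence "mu w (?f q) = ?f q" using idx_zero[OF fq] by simp
      moreover have "mu w (?f p) \<le> ?f p" using mu_le_self[OF fp] .
      ultimately show False using mp mq same lt by simp
    qed
    have sq: "idx (?f q) = Suc (idx q)" "Suc (idx q) < period w (mu w q)" using idx_succ[OF q nzq] by auto
    have "Suc (idx p) < period w (mu w p)" using sq(2) ipq same by simp
    hence "Suc (idx p) mod period w (mu w p) = Suc (idx p)" by simp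
    hence sp: "idx (?f p) = Suc (idx p)" using idx_perm[OF p] by simp
    have "before (?f p) (?f q)" unfolding before_def using mp mq same sp sq ipq by simp
    moreover have "(?f p, ?f q) \<notin> BB"
    proof
      assume "(?f p, ?f q) \<in> BB"
      hence "?f p = mu w (?f q)" unfolding BB_def by auto
      hence "mu w (?f p) = ?f p" using mp mq same by simp
      hence "idx (?f p) = 0" using idx_zero[OF fp] by simp
      thus False using sp by simp
    qed
    ultimately show ?thesis using z fp fq lt As_mem by simp
  qed
qed

lemma img_sup: "As 0 - BB \<subseteq> map_prod (braid_perm w) (braid_perm w) ` As (length w)"
proof
  fix z assume zin: "z \<in> As 0 - BB"
  obtain p' q' where z: "z = (p',q')" by fastforce
  let ?f = "braid_perm w"
  have p': "p' \<in> {1..m}" and q': "q' \<in> {1..m}" and b: "before p' q'" and lt: "p' < q'"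
    using zin z As_mem by auto
  have nB: "(p',q') \<notin> BB" using zin z by simp
  obtain p where p: "p \<in> {1..m}" "?f p = p'" using perm_surj[OF v p'] by blast
  obtain q where q: "q \<in> {1..m}" "?f q = q'" using perm_surj[OF v q'] by blast
  have mp: "mu w p' = mu w p" and mq: "mu w q' = mu w q" using mu_perm p q by auto
  have "before p q"
  proof (cases "mu w p' < mu w q'")
    case True
    then show ?thesis unfolding before_def using mp mq by simp
  next
    case False
    hence same: "mu w p' = mu w q'" and ipq: "idx p' < idx q'" using b unfolding before_def by auto
    have "p' \<noteq> mu w p'"
    proof
      assume e: "p' = mu w p'"
      have "mu w q' \<noteq> q'" using e same lt by simp
      hence "q' \<in> NB" using q' unfolding NB_def by simp
      hence "(mu w q', q') \<in> BB" unfolding BB_def by blast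
      thus False using nB e same by simp
    qed
    hence nzp: "idx (?f p) \<noteq> 0" using idx_zero[OF p'] p(2) by simp
    have nzq: "idx (?f q) \<noteq> 0" using ipq q(2) by simp
    have "idx p' = Suc (idx p)" "idx q' = Suc (idx q)"
      using idx_succ(1)[OF p(1) nzp] idx_succ(1)[OF q(1) nzq] p(2) q(2) by auto
    then show ?thesis unfolding before_def using mp mq same ipq by simp
  qed
  hence "(p,q) \<in> As (length w)" using p q lt As_mem pos_len by simp
  then show "z \<in> map_prod ?f ?f ` As (length w)" using z p(2) q(2) by force
qed

lemma BB_sub: "BB \<subseteq> As 0"
proof
  fix z assume "z \<in> BB"
  then obtain q where z: "z = (mu w q, q)" and q: "q \<in> {1..m}" "mu w q \<noteq> q"
    unfolding BB_def NB_def by auto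
  have "mu w q < q" using mu_le_self[OF q(1)] q(2) by simp
  moreover have "idx (mu w q) = 0" using idx_zero[OF mu_S[OF q(1)]] mu_mu[OF q(1)] by simp
  moreover have "idx q \<noteq> 0" using idx_zero[OF q(1)] q(2) by simp
  ultimately have "before (mu w q) q" unfolding before_def using mu_mu[OF q(1)] by simp
  then show "z \<in> As 0" using z q mu_S[OF q(1)] As_mem \<open>mu w q < q\<close> by simp
qed

lemma card_NB: "card NB = m - card (circle_reps m w)"
proof -
  have "NB = {1..m} - circle_reps m w" unfolding NB_def circle_reps_def by auto
  moreover have "circle_reps m w \<subseteq> {1..m}" unfolding circle_reps_def by auto
  ultimately show ?thesis by (simp add: card_Diff_subset finite_subset)
qed

lemma card_BB: "card BB = card NB"
  unfolding BB_def by (rule card_image) (auto intro: inj_onI)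

lemma num_circles_reps: "num_circles m w = card (circle_reps m w)"
proof -
  have "circles m w = circle_of w ` circle_reps m w"
  proof
    show "circles m w \<subseteq> circle_of w ` circle_reps m w"
    proof
      fix C assume "C \<in> circles m w"
      then obtain p where p: "p \<in> {1..m}" "C = circle_of w p" unfolding circles_def by auto
      then show "C \<in> circle_of w ` circle_reps m w"
        using reps_mem[OF p(1)] circle_mu[OF p(1)] by (metis image_eqI)
    qed
  next
    show "circle_of w ` circle_reps m w \<subseteq> circles m w"
      unfolding circles_def circle_reps_def by auto
  qed
  moreover have "inj_on (circle_of w) (circle_reps m w)"
  proof (rule inj_onI)
    fix a b assume "a \<in> circle_reps m w" "b \<in> circle_reps m w" "circle_of w a = circle_of w b"
    then show "a = b" unfolding circle_reps_def mu_def by auto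
  qed
  ultimately show ?thesis unfolding num_circles_def by (simp add: card_image)
qed

lemma main:
  assumes ta: "totally_ascending m w"
  shows "int (num_circles m w) = int m + writhe w"
proof -
  let ?f = "braid_perm w"
  have img: "map_prod ?f ?f ` As (length w) = As 0 - BB" using img_sub img_sup by blast
  have "inj_on (map_prod ?f ?f) (As (length w))"
    using perm_inj[of w] by (intro inj_onI) (auto simp: inj_eq)
  hence c1: "card (As (length w)) = card (As 0 - BB)" using img card_image by fastforce
  have fB: "finite BB" using BB_sub As_finite finite_subset by blast
  have c2: "card (As 0 - BB) = card (As 0) - card BB" using BB_sub fB by (simp add: card_Diff_subset)
  have c3: "card BB \<le> card (As 0)" using BB_sub As_finite card_mono by blast
  have c4: "card (circle_reps m w) \<le> m"
  proof -
    have "circle_reps m w \<subseteq> {1..m}" unfolding circle_reps_def by auto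
    then show ?thesis using card_mono[of "{1..m}"] by fastforce
  qed
  show ?thesis using writhe_As[OF ta] c1 c2 c3 c4 card_BB card_NB num_circles_reps by simp
qed

end

theorem lemma4p3:
  fixes m :: nat and w :: "letter list"
  assumes "valid_braid m w"
    and "totally_ascending m w"
  shows "int (num_circles m w) = int m + writhe w"
  using main[OF assms(1) assms(2)] .

end
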